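(* Let $d>K\ge1$, $\mathbf Q\in\mathrm{St}(d,K)$, $\lambda_1>\dots>\lambda_K>0$, $\boldsymbol\Theta=\mathrm{diag}(\sqrt{\lambda_1},\dots,\sqrt{\lambda_K})$, $a_1>\dots>a_K>0$, and let $g$, $d_F$, $\mathcal A_\alpha$, $\mathcal P_{\mathrm{St}}$ be as in the context. There exist $\delta\in(0,\tfrac{\sqrt2}{2})$ with $\lambda_Ka_K-\lambda_1a_1\delta>0$ and $\bar\eta>0$ satisfying $g(\mathbf Q)-g(\mathbf X)\ge\bar\eta\,d_F^2(\mathbf X,\mathbf Q)$ for all $\mathbf X\in\mathrm{St}(d,K)$, such that for every $\alpha\in(0,\lambda_Ka_K-\lambda_1a_1\delta)$ there exist constants $a>0$ and $\gamma\in(0,1)$ with the following property: for every $\mathbf X^0\in\mathrm{St}(d,K)$ with $g(\mathbf Q)-g(\mathbf X^0)\le\delta^2\bar\eta$ and every sequence generated by $\mathbf X^{t+1}\in\mathcal P_{\mathrm{St}}(\mathcal A_\alpha(\mathbf X^t))$, $t=0,1,\dots$, we have for all $t\ge0$ $$g(\mathbf Q)-g(\mathbf X^{t+1})\le\gamma\big(g(\mathbf Q)-g(\mathbf X^t)\big)\quad\text{and}\quad d_F(\mathbf X^t,\mathbf Q)\le a\big(g(\mathbf Q)-g(\mathbf X^0)\big)^{1/2}(\sqrt\gamma)^t.$$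
   Context: $\mathrm{St}(d,K)=\{\mathbf X\in\mathbb R^{d\times K}:\mathbf X^\top\mathbf X=\mathbf I_K\}$. $g(\mathbf X)=\mathrm{tr}(\mathbf X^\top\mathbf Q\boldsymbol\Theta^2\mathbf Q^\top\mathbf X\,\mathrm{diag}(a_1,\dots,a_K))$ (maximized over $\mathrm{St}(d,K)$). $d_F(\mathbf X,\mathbf Q)=\min_{\mathbf q\in\{1,-1\}^K}\|\mathbf X-\mathbf Q\,\mathrm{diag}(\mathbf q)\|_F$. $\mathcal A_\alpha(\mathbf X)=\alpha\mathbf X+\mathbf Q\boldsymbol\Theta^2\mathbf Q^\top\mathbf X\,\mathrm{diag}(a_1,\dots,a_K)$. $\mathcal P_{\mathrm{St}}(\mathbf Y)$ is the set of Frobenius-nearest points of $\mathrm{St}(d,K)$ to $\mathbf Y$ (containing $\mathbf U\mathbf V^\top$ for any thin SVD $\mathbf Y=\mathbf U\boldsymbol\Sigma\mathbf V^\top$); any element may be chosen. *)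

theory Defs
  imports "HOL-Analysis.Analysis"
begin

text \<open>Matrices in R^(d x K) are represented as real^'k^'d (rows indexed by 'd, columns by 'k).
  The norm on real^'k^'d is the Frobenius norm.\<close>

definition Stiefel :: "(real^'k^'d) set" where
  "Stiefel = {X. transpose X ** X = mat 1}"

definition diagm :: "('k \<Rightarrow> real) \<Rightarrow> real^'k^'k" where
  "diagm v = (\<chi> i j. if i = j then v i else 0)"

definition Theta :: "('k \<Rightarrow> real) \<Rightarrow> real^'k^'k" where
  "Theta lam = diagm (\<lambda>i. sqrt (lam i))"

definition gfun :: "real^'k^'d \<Rightarrow> ('k \<Rightarrow> real) \<Rightarrow> ('k \<Rightarrow> real) \<Rightarrow> real^'k^'d \<Rightarrow> real" where
  "gfun Q lam a X =
     trace (transpose X ** Q ** (Theta lam ** Theta lam) ** transpose Q ** X ** diagm a)"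

definition dF :: "real^'k^'d \<Rightarrow> real^'k^'d \<Rightarrow> real" where
  "dF X Q = Min {norm (X - Q ** diagm q) | q. \<forall>i. q i \<in> {1, -1}}"

definition Aop :: "real \<Rightarrow> real^'k^'d \<Rightarrow> ('k \<Rightarrow> real) \<Rightarrow> ('k \<Rightarrow> real) \<Rightarrow> real^'k^'d \<Rightarrow> real^'k^'d" where
  "Aop alpha Q lam a X = alpha *\<^sub>R X + Q ** (Theta lam ** Theta lam) ** transpose Q ** X ** diagm a"

definition PSt :: "real^'k^'d \<Rightarrow> (real^'k^'d) set" where
  "PSt Y = {X \<in> Stiefel. \<forall>Z \<in> Stiefel. norm (Y - X) \<le> norm (Y - Z)}"

end

theory Submission
  imports Defs
begin


type_synonym ('k,'d) mt = "real^'k^'d"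

lemma mmul_nth: "((A::real^'n^'m) ** B)$i$j = (\<Sum>k\<in>UNIV. A$i$k * B$k$j)"
  by (simp add: matrix_matrix_mult_def)

lemma tr_nth[simp]: "transpose (A::real^'n^'m) $i$j = A$j$i"
  by (simp add: transpose_def)

lemma inner_mat: "inner (A::real^'n^'m) B = (\<Sum>i\<in>UNIV. \<Sum>j\<in>UNIV. A$i$j * B$i$j)"
  by (simp add: inner_vec_def)

lemma madd_r: "((A::real^'n^'m) + B) ** C = A ** C + B ** C"
  by (simp add: matrix_matrix_mult_def vec_eq_iff algebra_simps sum.distrib)
lemma madd_l: "(A::real^'n^'m) ** (B + C) = A ** B + A ** C"
  by (simp add: matrix_matrix_mult_def vec_eq_iff algebra_simps sum.distrib)
lemma mdiff_r: "((A::real^'n^'m) - B) ** C = A ** C - B ** C"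
  by (simp add: matrix_matrix_mult_def vec_eq_iff algebra_simps sum_subtractf)
lemma mdiff_l: "(A::real^'n^'m) ** (B - C) = A ** B - A ** C"
  by (simp add: matrix_matrix_mult_def vec_eq_iff algebra_simps sum_subtractf)
lemma mneg_r: "(- (A::real^'n^'m)) ** C = - (A ** C)"
  by (simp add: matrix_matrix_mult_def vec_eq_iff sum_negf)
lemma mneg_l: "(A::real^'n^'m) ** (- C) = - (A ** C)"
  by (simp add: matrix_matrix_mult_def vec_eq_iff sum_negf)
lemma msc_r: "(c *\<^sub>R (A::real^'n^'m)) ** C = c *\<^sub>R (A ** C)"
  by (simp add: matrix_matrix_mult_def vec_eq_iff sum_distrib_left mult.assoc)
lemma msc_l: "(A::real^'n^'m) ** (c *\<^sub>R C) = c *\<^sub>R (A ** C)"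
  by (simp add: matrix_matrix_mult_def vec_eq_iff sum_distrib_left algebra_simps)
lemma tr_add: "transpose ((A::real^'n^'m) + B) = transpose A + transpose B"
  by (simp add: vec_eq_iff)
lemma tr_diff: "transpose ((A::real^'n^'m) - B) = transpose A - transpose B"
  by (simp add: vec_eq_iff)
lemma tr_neg: "transpose (- (A::real^'n^'m)) = - transpose A"
  by (simp add: vec_eq_iff)
lemma tr_sc: "transpose (c *\<^sub>R (A::real^'n^'m)) = c *\<^sub>R transpose A"
  by (simp add: vec_eq_iff)
lemma tr_mul: "transpose ((A::real^'n^'m) ** B) = transpose B ** transpose A"
  by (simp add: matrix_transpose_mul)
lemma m_assoc: "((A::real^'n^'m) ** B) ** C = A ** (B ** C)"
  by (simp add: matrix_mul_assoc)
lemma mzero_l: "(0::real^'n^'m) ** C = 0" by (simp add: matrix_matrix_mult_def vec_eq_iff)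
lemma mzero_r: "(A::real^'n^'m) ** 0 = 0" by (simp add: matrix_matrix_mult_def vec_eq_iff)

lemmas malg = madd_r madd_l mdiff_r mdiff_l mneg_r mneg_l msc_r msc_l tr_add tr_diff tr_neg tr_sc tr_mul m_assoc
  mzero_l mzero_r transpose_transpose

lemma sum3_swap: "(\<Sum>i\<in>A. \<Sum>k\<in>B. \<Sum>j\<in>C. f i k j) = (\<Sum>k\<in>B. \<Sum>j\<in>C. \<Sum>i\<in>A. (f i k j::real))"
proof -
  have "(\<Sum>i\<in>A. \<Sum>k\<in>B. \<Sum>j\<in>C. f i k j) = (\<Sum>k\<in>B. \<Sum>i\<in>A. \<Sum>j\<in>C. f i k j)"
    by (rule sum.swap)
  also have "\<dots> = (\<Sum>k\<in>B. \<Sum>j\<in>C. \<Sum>i\<in>A. f i k j)"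
    by (rule sum.cong, simp, rule sum.swap)
  finally show ?thesis .
qed

lemma inner_mul_left: "inner ((A::real^'n^'m) ** B) C = inner B (transpose A ** C)"
proof -
  have "inner (A ** B) C = (\<Sum>i\<in>UNIV. \<Sum>k\<in>UNIV. \<Sum>j\<in>UNIV. A$i$k * B$k$j * C$i$j)"
    by (simp add: inner_mat mmul_nth sum_distrib_right, subst sum.swap, simp)
  also have "\<dots> = (\<Sum>k\<in>UNIV. \<Sum>j\<in>UNIV. \<Sum>i\<in>UNIV. A$i$k * B$k$j * C$i$j)"
    by (rule sum3_swap)
  also have "\<dots> = inner B (transpose A ** C)"
    by (simp add: inner_mat mmul_nth sum_distrib_left mult_ac)
  finally show ?thesis .
qed

lemma inner_mul_right: "inner ((A::real^'n^'m) ** B) C = inner A (C ** transpose B)"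
proof -
  have "inner (A ** B) C = (\<Sum>i\<in>UNIV. \<Sum>j\<in>UNIV. \<Sum>k\<in>UNIV. A$i$k * B$k$j * C$i$j)"
    by (simp add: inner_mat mmul_nth sum_distrib_right)
  also have "\<dots> = (\<Sum>i\<in>UNIV. \<Sum>k\<in>UNIV. \<Sum>j\<in>UNIV. A$i$k * B$k$j * C$i$j)"
    by (rule sum.cong, simp) (rule sum.swap)
  also have "\<dots> = inner A (C ** transpose B)"
    by (simp add: inner_mat mmul_nth sum_distrib_left mult_ac)
  finally show ?thesis .
qed

lemma inner_tr: "inner (transpose (A::real^'n^'m)) (transpose B) = inner A B"
  unfolding inner_mat by (simp, subst sum.swap, simp)

lemma norm_tr: "norm (transpose (A::real^'n^'m)) = norm A"
  by (simp add: norm_eq_sqrt_inner inner_tr)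

lemma inner_mat1: "inner (mat 1 :: real^'n^'n) A = (\<Sum>i\<in>UNIV. A$i$i)"
  by (simp add: inner_mat mat_def if_distrib if_distribR cong: if_cong)

lemma trace_inner: "trace (transpose (X::real^'n^'m) ** N) = inner X N"
  by (simp add: trace_def mmul_nth inner_mat, subst sum.swap, simp)


lemma norm2_mat: "(norm (A::real^'n^'m))\<^sup>2 = (\<Sum>i\<in>UNIV. \<Sum>j\<in>UNIV. (A$i$j)\<^sup>2)"
  by (simp only: power2_norm_eq_inner) (simp add: inner_mat power2_eq_square)

lemma norm2_vec: "(norm (v::real^'n))\<^sup>2 = (\<Sum>j\<in>UNIV. (v$j)\<^sup>2)"
  by (simp only: power2_norm_eq_inner) (simp add: inner_vec_def power2_eq_square)

lemma norm_mmul: "norm ((A::real^'n^'m) ** B) \<le> norm A * norm B"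
proof -
  have e: "(A ** B)$i$j = inner (A$i) (column j B)" for i j
    by (simp add: mmul_nth inner_vec_def column_def)
  have b: "((A ** B)$i$j)\<^sup>2 \<le> (norm (A$i))\<^sup>2 * (norm (column j B))\<^sup>2" for i j
  proof -
    have "\<bar>(A ** B)$i$j\<bar> \<le> norm (A$i) * norm (column j B)"
      unfolding e by (rule Cauchy_Schwarz_ineq2)
    hence "\<bar>(A ** B)$i$j\<bar>\<^sup>2 \<le> (norm (A$i) * norm (column j B))\<^sup>2"
      by (rule power_mono) simp
    thus ?thesis by (simp add: power_mult_distrib)
  qed
  have "(norm (A ** B))\<^sup>2 \<le> (\<Sum>i\<in>UNIV. \<Sum>j\<in>UNIV. (norm (A$i))\<^sup>2 * (norm (column j B))\<^sup>2)"
    unfolding norm2_mat by (intro sum_mono b)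
  also have "\<dots> = (\<Sum>i\<in>UNIV. (norm (A$i))\<^sup>2) * (\<Sum>j\<in>UNIV. (norm (column j B))\<^sup>2)"
    by (rule sum_product[symmetric])
  also have "(\<Sum>i\<in>UNIV. (norm (A$i))\<^sup>2) = (norm A)\<^sup>2"
    by (simp add: norm2_mat norm2_vec)
  also have "(\<Sum>j\<in>UNIV. (norm (column j B))\<^sup>2) = (norm B)\<^sup>2"
    by (simp add: norm2_mat norm2_vec column_def, subst sum.swap, simp)
  finally have "(norm (A ** B))\<^sup>2 \<le> (norm A * norm B)\<^sup>2" by (simp add: power_mult_distrib)
  thus ?thesis by (rule power2_le_imp_le) simp
qed

lemma inner_le_norm: "inner (A::real^'n^'m) B \<le> norm A * norm B"
  using Cauchy_Schwarz_ineq2[of A B] by linarith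

lemma abs_inner_le_norm: "\<bar>inner (A::real^'n^'m) B\<bar> \<le> norm A * norm B"
  using Cauchy_Schwarz_ineq2[of A B] by linarith

lemma stiefel_iff: "X \<in> Stiefel \<longleftrightarrow> transpose X ** X = mat 1"
  by (simp add: Stiefel_def)

lemma stiefel_inner: "X \<in> Stiefel \<Longrightarrow> inner (X ** B) (X ** C) = inner B C"
  by (simp add: inner_mul_left stiefel_iff matrix_mul_assoc)

lemma inner_mat11: "inner (mat 1 :: real^'n^'n) (mat 1) = real CARD('n)"
  by (simp add: inner_mat1, simp add: mat_def)

lemma stiefel_inner_self: "(X::real^'k^'d) \<in> Stiefel \<Longrightarrow> inner X X = real CARD('k)"
  using stiefel_inner[of X "mat 1" "mat 1"] by (simp add: inner_mat11)

lemma stiefel_norm2: "(X::real^'k^'d) \<in> Stiefel \<Longrightarrow> (norm X)\<^sup>2 = real CARD('k)"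
  by (simp add: power2_norm_eq_inner stiefel_inner_self)

lemma stiefel_norm: "(X::real^'k^'d) \<in> Stiefel \<Longrightarrow> norm X = sqrt (real CARD('k))"
  by (metis norm_ge_zero real_sqrt_unique stiefel_norm2)

lemma stiefel_norm_mul: "X \<in> Stiefel \<Longrightarrow> norm (X ** B) = norm B"
  by (simp add: norm_eq_sqrt_inner stiefel_inner)

lemma diagm_nth: "diagm v $ i $ j = (if i = j then v i else 0)"
  by (simp add: diagm_def)
lemma diagm_mul_l: "(diagm v ** A)$i$j = v i * A$i$j"
  by (simp add: mmul_nth diagm_nth if_distrib if_distribR cong: if_cong)
lemma diagm_mul_r: "(A ** diagm v)$i$j = A$i$j * v j"
  by (simp add: mmul_nth diagm_nth if_distrib if_distribR cong: if_cong)
lemma diagm_tr: "transpose (diagm v) = diagm v"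
  by (simp add: vec_eq_iff diagm_nth)
lemma diagm_mul: "diagm v ** diagm w = diagm (\<lambda>i. v i * w i)"
  by (simp add: vec_eq_iff diagm_mul_l diagm_nth)
lemma diagm_one: "diagm (\<lambda>i. 1) = mat 1"
  by (simp add: vec_eq_iff diagm_nth mat_def)
lemma Theta_sq: "(\<And>i. lam i \<ge> 0) \<Longrightarrow> Theta lam ** Theta lam = diagm lam"
  by (simp add: Theta_def diagm_mul)
lemma inner_diagm: "inner A (diagm v) = (\<Sum>i\<in>UNIV. A$i$i * v i)"
  by (simp add: inner_mat diagm_nth if_distrib if_distribR cong: if_cong)



lemma stief_pert:
  assumes "Q0 \<in> Stiefel" "X \<in> Stiefel"
  shows "transpose X ** (X - Q0) + transpose (X - Q0) ** X = transpose (X - Q0) ** (X - Q0)"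
proof -
  have a: "transpose X ** X = mat 1" "transpose Q0 ** Q0 = mat 1" using assms by (auto simp: stiefel_iff)
  show ?thesis using a by (simp add: malg algebra_simps)
qed



definition gq :: "real^'d^'d \<Rightarrow> real^'k^'k \<Rightarrow> real^'k^'d \<Rightarrow> real" where
  "gq M D X = inner X (M ** X ** D)"

lemma gq_sym:
  fixes M :: "real^'d^'d" and D :: "real^'k^'k" and X E :: "real^'k^'d"
  assumes "transpose M = M" "transpose D = D"
  shows "inner E (M ** X ** D) = inner X (M ** E ** D)"
proof -
  have "inner E (M ** X ** D) = inner (M ** X ** D) E" by (rule inner_commute)
  also have "\<dots> = inner (M ** X) (E ** D)" using inner_mul_right[of "M ** X" D E] by (simp add: assms)
  also have "\<dots> = inner X (M ** E ** D)" by (simp add: inner_mul_left assms matrix_mul_assoc)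
  finally show ?thesis .
qed

lemma gq_expand:
  fixes M :: "real^'d^'d" and D :: "real^'k^'k" and X E :: "real^'k^'d"
  assumes "transpose M = M" "transpose D = D"
  shows "gq M D (X + E) = gq M D X + 2 * inner E (M ** X ** D) + gq M D E"
  using gq_sym[OF assms, of E X] by (simp add: gq_def malg inner_add_left inner_add_right)

lemma gq_neg: "gq M D (- E) = gq M D E"
  by (simp add: gq_def malg)

lemma M_sym: "transpose (Q0 ** diagm lam ** transpose Q0) = Q0 ** diagm lam ** transpose Q0"
  by (simp add: malg diagm_tr)

lemma gq_nonneg:
  assumes "\<forall>i. lam i \<ge> 0" "\<forall>i. a i \<ge> 0"
  shows "gq (Q0 ** diagm lam ** transpose Q0) (diagm a) E \<ge> 0"
proof -
  let ?B = "transpose Q0 ** E"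
  have "gq (Q0 ** diagm lam ** transpose Q0) (diagm a) E = inner ?B (diagm lam ** ?B ** diagm a)"
    by (simp add: gq_def inner_mul_left malg)
  also have "\<dots> = (\<Sum>i\<in>UNIV. \<Sum>j\<in>UNIV. lam i * a j * (?B$i$j)\<^sup>2)"
    by (simp add: inner_mat diagm_mul_l diagm_mul_r power2_eq_square mult_ac)
  also have "\<dots> \<ge> 0" using assms by (intro sum_nonneg) auto
  finally show ?thesis by simp
qed

lemma gq_stiefel:
  assumes "Q0 \<in> Stiefel"
  shows "gq (Q0 ** diagm lam ** transpose Q0) (diagm a) Q0 = (\<Sum>i\<in>UNIV. lam i * a i)"
proof -
  have QQ: "transpose Q0 ** Q0 = mat 1" using assms by (simp add: stiefel_iff)
  have "gq (Q0 ** diagm lam ** transpose Q0) (diagm a) Q0 = inner (transpose Q0 ** Q0) (diagm lam ** (transpose Q0 ** Q0) ** diagm a)"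
    by (simp add: gq_def inner_mul_left malg)
  also have "\<dots> = (\<Sum>i\<in>UNIV. lam i * a i)"
    by (simp add: QQ inner_mat1, simp add: diagm_mul_l diagm_mul_r mat_def diagm_nth)
  finally show ?thesis .
qed



lemma skew_inner0:
  fixes Om :: "real^'d^'d" and T :: "real^'k^'d"
  assumes "transpose Om = - Om"
  shows "inner T (Om ** T) = 0"
proof -
  have "inner T (Om ** T) = inner (Om ** T) T" by (rule inner_commute)
  also have "\<dots> = inner T (transpose Om ** T)" by (rule inner_mul_left)
  also have "\<dots> = - inner T (Om ** T)" by (simp add: assms malg)
  finally show ?thesis by simp
qed

lemma skew_solve:
  fixes Om :: "real^'d^'d" and B :: "real^'k^'d"
  assumes "transpose Om = - Om"
  shows "\<exists>T. T - Om ** T = B"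
proof -
  let ?f = "\<lambda>T::real^'k^'d. T - Om ** T"
  have lin: "linear ?f"
    by (rule linearI) (simp_all add: malg algebra_simps)
  have inj: "inj ?f"
  proof (rule injI)
    fix x y assume "?f x = ?f y"
    hence "?f (x - y) = 0" by (simp add: malg algebra_simps)
    hence "inner (x - y) (?f (x - y)) = 0" by simp
    hence "inner (x - y) (x - y) = 0"
      using skew_inner0[OF assms, of "x - y"] by (simp add: inner_diff_right)
    thus "x = y" by simp
  qed
  have "surj ?f" using lin inj by (simp add: linear_injective_imp_surjective)
  thus ?thesis by (metis surjD)
qed

lemma skew_norm:
  fixes Om :: "real^'d^'d" and T :: "real^'k^'d"
  assumes "transpose Om = - Om"
  shows "norm T \<le> norm (T - Om ** T)"
proof -
  have "(norm (T - Om ** T))\<^sup>2 = (norm T)\<^sup>2 + (norm (Om ** T))\<^sup>2"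
    using skew_inner0[OF assms, of T]
    by (simp add: power2_norm_eq_inner inner_diff_left inner_diff_right inner_commute)
  hence "(norm T)\<^sup>2 \<le> (norm (T - Om ** T))\<^sup>2" by simp
  thus ?thesis by (rule power2_le_imp_le) simp
qed

lemma cayley_stiefel:
  fixes Om :: "real^'d^'d" and T X :: "real^'k^'d"
  assumes X: "X \<in> Stiefel" and sk: "transpose Om = - Om" and T: "T = Om ** (T + 2 *\<^sub>R X)"
  shows "X + T \<in> Stiefel"
proof -
  let ?S = "T + 2 *\<^sub>R X"
  have XX: "transpose X ** X = mat 1" using X by (simp add: stiefel_iff)
  have a: "transpose ?S ** T + transpose T ** ?S = 0"
  proof -
    have "transpose ?S ** T + transpose T ** ?S = transpose ?S ** (Om ** ?S) + transpose (Om ** ?S) ** ?S"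
      using T by metis
    also have "\<dots> = 0" by (simp add: malg sk algebra_simps)
    finally show ?thesis .
  qed
  have b: "transpose X ** T + transpose T ** X + transpose T ** T = (1/2) *\<^sub>R (transpose ?S ** T + transpose T ** ?S)"
    by (simp add: malg algebra_simps)
  have "transpose (X + T) ** (X + T) = transpose X ** X + (transpose X ** T + transpose T ** X + transpose T ** T)"
    by (simp add: malg algebra_simps)
  also have "\<dots> = mat 1" using a b XX by simp
  finally show ?thesis by (simp add: stiefel_iff)
qed

lemma PSt_opt:
  fixes A Y :: "real^'k^'d"
  assumes "Y \<in> PSt A"
  shows "Y \<in> Stiefel" "\<And>Z. Z \<in> Stiefel \<Longrightarrow> inner A Z \<le> inner A Y"
proof -
  show Y: "Y \<in> Stiefel" using assms by (simp add: PSt_def)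
  fix Z :: "real^'k^'d" assume Z: "Z \<in> Stiefel"
  have "norm (A - Y) \<le> norm (A - Z)" using assms Z by (simp add: PSt_def)
  hence "(norm (A - Y))\<^sup>2 \<le> (norm (A - Z))\<^sup>2" by (simp add: power_mono)
  thus "inner A Z \<le> inner A Y"
    using stiefel_inner_self[OF Y] stiefel_inner_self[OF Z]
    by (simp add: power2_norm_eq_inner inner_diff_left inner_diff_right inner_commute)
qed



lemma stiefel_cancel: "X \<in> Stiefel \<Longrightarrow> transpose X ** (X ** B) = B"
  by (simp add: stiefel_iff matrix_mul_assoc)

lemma vec2: "(2::real^'n^'m) * A = (2::real) *\<^sub>R A"
  by (simp add: vec_eq_iff)

lemma local_step:
  fixes Q0 X Y :: "real^'k^'d" and lam a :: "'k \<Rightarrow> real" and M :: "real^'d^'d" and D :: "real^'k^'k"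
  assumes Q0: "Q0 \<in> Stiefel" and X: "X \<in> Stiefel"
    and lam: "\<forall>i. lam i \<ge> 0" and a: "\<forall>i. a i \<ge> 0"
    and M: "M = Q0 ** diagm lam ** transpose Q0" and D: "D = diagm a"
    and Y: "Y \<in> PSt (\<alpha> *\<^sub>R X + M ** X ** D)" and al: "\<alpha> > 0" and th: "0 < \<theta>" "\<theta> \<le> 1"
    and ep1: "norm (X - Q0) \<le> 1"
  shows "gq M D Y - gq M D X \<ge> 2*\<theta>*((\<Sum>i\<in>UNIV. lam i * a i) - gq M D X)
      - \<theta> * (2 * sqrt (real CARD('k)) * norm M * norm D) * norm (X - Q0)^3
      - \<theta>^2 * ((2 * norm M * norm D * real CARD('k) * (1 + real CARD('k)/2) + \<alpha>) * (1 + sqrt (real CARD('k)))^2) * norm (X - Q0)^2"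
proof -
  define k where "k = real CARD('k)"
  define sk where "sk = sqrt k"
  define E where "E = X - Q0"
  define ep where "ep = norm E"
  define G where "G = M ** X ** D"
  define GG where "GG = (\<Sum>i\<in>UNIV. lam i * a i)"
  define L where "L = diagm lam ** D"
  have XX: "transpose X ** (X ** B) = B" for B :: "real^'k^'k" using X by (rule stiefel_cancel)
  have XX1: "transpose X ** X = mat 1" using X by (simp add: stiefel_iff)
  have QQ: "transpose Q0 ** (Q0 ** B) = B" for B :: "real^'k^'k" using Q0 by (rule stiefel_cancel)
  have Msym: "transpose M = M" by (simp add: M malg diagm_tr)
  have Dsym: "transpose D = D" by (simp add: D diagm_tr)
  have Lsym: "transpose L = L" by (simp add: L_def D diagm_mul diagm_tr)
  have nX: "norm X = sk" using X by (simp add: stiefel_norm sk_def k_def)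
  have nQ: "norm Q0 = sk" using Q0 by (simp add: stiefel_norm sk_def k_def)
  have nXt: "norm (transpose X) = sk" by (simp add: norm_tr nX)
  have sk0: "sk \<ge> 0" by (simp add: sk_def k_def)
  have k0: "k \<ge> 0" by (simp add: k_def)
  have skk: "sk * sk = k" by (simp add: sk_def k_def)
  have ep0: "0 \<le> ep" by (simp add: ep_def)
  have ep1': "ep \<le> 1" using ep1 by (simp add: ep_def E_def)
  have gnn: "gq M D B \<ge> 0" for B using gq_nonneg[OF lam a, of Q0 B] by (simp add: M D)
  have XE: "transpose X ** E + transpose E ** X = transpose E ** E"
    unfolding E_def by (rule stief_pert[OF Q0 X])
  have pert: "transpose Q0 ** E + transpose E ** Q0 = - (transpose E ** E)"
    using XX1 Q0 by (simp add: E_def malg algebra_simps stiefel_iff)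
  have gQ0: "gq M D Q0 = GG" unfolding GG_def M D by (rule gq_stiefel[OF Q0])
  have MQ: "M ** Q0 ** D = Q0 ** L" by (simp add: M L_def malg QQ)
  have gapid: "gq M D X = GG - inner (transpose E ** E) L + gq M D E"
  proof -
    have XQE: "X = Q0 + E" by (simp add: E_def)
    have e: "gq M D X = gq M D Q0 + 2 * inner E (M ** Q0 ** D) + gq M D E"
      unfolding XQE by (rule gq_expand[OF Msym Dsym])
    have i1: "inner E (M ** Q0 ** D) = inner (transpose Q0 ** E) L"
      by (simp add: MQ inner_commute[of E] inner_mul_left)
    have i2: "inner (transpose Q0 ** E) L = inner (transpose E ** Q0) L"
      using inner_tr[of "transpose E ** Q0" L] by (simp add: Lsym malg)
    have i3: "inner (transpose Q0 ** E) L + inner (transpose E ** Q0) L = - inner (transpose E ** E) L"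
      by (simp add: inner_add_left[symmetric] pert)
    show ?thesis using e i1 i2 i3 gQ0 by simp
  qed
  have gQ0': "GG = gq M D X - 2 * inner E G + gq M D E"
  proof -
    have "gq M D (X + (- E)) = gq M D X + 2 * inner (- E) (M ** X ** D) + gq M D (- E)"
      by (rule gq_expand[OF Msym Dsym])
    moreover have "X + (- E) = Q0" by (simp add: E_def)
    ultimately show ?thesis by (simp add: gQ0 gq_neg G_def)
  qed
  define V where "V = - E + (1/2) *\<^sub>R (X ** (transpose E ** E))"
  define W where "W = V - (1/2) *\<^sub>R (X ** (transpose X ** V))"
  define Om where "Om = (\<theta>/2) *\<^sub>R (W ** transpose X - X ** transpose W)"
  have F1: "transpose X ** V + transpose V ** X = 0"
  proof -
    have "transpose X ** V + transpose V ** X = transpose E ** E - (transpose X ** E + transpose E ** X)"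
      by (simp add: V_def malg XX XX1 algebra_simps)
    thus ?thesis using XE by simp
  qed
  have F2: "Om ** X = (\<theta>/2) *\<^sub>R V"
  proof -
    have "Om ** X = (\<theta>/2) *\<^sub>R (V - (1/2) *\<^sub>R (X ** (transpose X ** V + transpose V ** X)))"
      by (simp add: Om_def W_def malg XX XX1 algebra_simps vec2)
    thus ?thesis using F1 by simp
  qed
  have F3: "transpose Om = - Om" by (simp add: Om_def malg algebra_simps)
  obtain T where T: "T - Om ** T = \<theta> *\<^sub>R V" using skew_solve[OF F3] by blast
  have T2: "T = Om ** (T + 2 *\<^sub>R X)"
  proof -
    have "Om ** (T + 2 *\<^sub>R X) = Om ** T + 2 *\<^sub>R (Om ** X)" by (simp add: malg)
    also have "\<dots> = Om ** T + \<theta> *\<^sub>R V" by (simp add: F2)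
    also have "\<dots> = T" using T by (simp add: algebra_simps)
    finally show ?thesis by simp
  qed
  define Z where "Z = X + T"
  have Z: "Z \<in> Stiefel" unfolding Z_def by (rule cayley_stiefel[OF X F3 T2])
  have nT: "norm T \<le> \<theta> * norm V"
    using skew_norm[OF F3, of T] T th by simp
  define R where "R = Om ** T"
  have TR: "T = \<theta> *\<^sub>R V + R" using T by (simp add: R_def algebra_simps)
  have mm: "gq M D Y - gq M D X \<ge> 2 * inner G T - \<alpha> * (norm T)\<^sup>2"
  proof -
    have Ys: "Y \<in> Stiefel" by (rule PSt_opt(1)[OF Y])
    have opt: "inner (\<alpha> *\<^sub>R X + G) Z \<le> inner (\<alpha> *\<^sub>R X + G) Y"
      using PSt_opt(2)[OF Y Z] by (simp add: G_def)
    have e1: "gq M D Y = gq M D X + 2 * inner (Y - X) G + gq M D (Y - X)"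
      using gq_expand[OF Msym Dsym, of X "Y - X"] by (simp add: G_def)
    have XY: "inner X Y \<le> k"
    proof -
      have "0 \<le> (norm (X - Y))\<^sup>2" by simp
      also have "(norm (X - Y))\<^sup>2 = inner X X - 2 * inner X Y + inner Y Y"
        by (simp add: power2_norm_eq_inner inner_diff_left inner_diff_right inner_commute)
      finally show ?thesis using stiefel_inner_self[OF X] stiefel_inner_self[OF Ys] by (simp add: k_def)
    qed
    have XZ: "inner X Z = k - (norm T)\<^sup>2 / 2"
    proof -
      have "(norm T)\<^sup>2 = (norm (Z - X))\<^sup>2" by (simp add: Z_def)
      also have "\<dots> = inner Z Z - 2 * inner X Z + inner X X"
        by (simp add: power2_norm_eq_inner inner_diff_left inner_diff_right inner_commute)
      finally show ?thesis using stiefel_inner_self[OF X] stiefel_inner_self[OF Z] by (simp add: k_def field_simps)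
    qed
    have "\<alpha> * inner X Z + inner G Z \<le> \<alpha> * inner X Y + inner G Y"
      using opt by (simp add: inner_add_left)
    hence "inner G (Y - X) \<ge> inner G T + \<alpha> * (inner X Z - inner X Y)"
      by (simp add: Z_def inner_diff_right inner_add_right algebra_simps)
    moreover have "\<alpha> * (inner X Z - inner X Y) \<ge> - \<alpha> * (norm T)\<^sup>2 / 2"
    proof -
      have "inner X Y - inner X Z \<le> (norm T)\<^sup>2 / 2" using XY XZ by linarith
      hence "\<alpha> * (inner X Y - inner X Z) \<le> \<alpha> * ((norm T)\<^sup>2 / 2)"
        using al by (intro mult_left_mono) auto
      thus ?thesis by (simp add: algebra_simps)
    qed
    ultimately have "inner G (Y - X) \<ge> inner G T - \<alpha> * (norm T)\<^sup>2 / 2" by linarith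
    moreover have "gq M D (Y - X) \<ge> 0" by (rule gnn)
    ultimately show ?thesis using e1 by (simp add: inner_commute)
  qed
  have gain: "2 * inner G V = 2 * (GG - gq M D X) + inner (transpose X ** G - L) (transpose E ** E)"
  proof -
    have gx: "inner G (X ** (transpose E ** E)) = inner (transpose X ** G) (transpose E ** E)"
      using inner_mul_left[of X "transpose E ** E" G] by (simp add: inner_commute)
    have "2 * inner G V = - 2 * inner E G + inner (transpose X ** G) (transpose E ** E)"
      by (simp add: V_def inner_add_right inner_diff_right inner_commute[of G E] gx[symmetric])
    also have "inner (transpose X ** G) (transpose E ** E) = inner L (transpose E ** E) + inner (transpose X ** G - L) (transpose E ** E)"
      by (simp add: inner_diff_left)
    finally show ?thesis using gQ0' gapid by (simp add: inner_commute[of L])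
  qed
  have dif: "transpose X ** M ** X - diagm lam = transpose E ** (M ** X) + transpose Q0 ** (M ** E)"
    using Q0 by (simp add: E_def M malg QQ algebra_simps stiefel_iff)
  have errb: "\<bar>inner (transpose X ** G - L) (transpose E ** E)\<bar> \<le> 2 * sk * norm M * norm D * ep^3"
  proof -
    have "transpose X ** G - L = (transpose X ** M ** X - diagm lam) ** D"
      by (simp add: G_def L_def malg)
    hence h: "transpose X ** G - L = (transpose E ** (M ** X) + transpose Q0 ** (M ** E)) ** D"
      by (simp add: dif)
    have n1: "norm (transpose E ** (M ** X)) \<le> ep * (norm M * sk)"
    proof -
      have "norm (transpose E ** (M ** X)) \<le> norm (transpose E) * norm (M ** X)" by (rule norm_mmul)
      also have "\<dots> \<le> ep * (norm M * sk)"
        using norm_mmul[of M X] by (simp add: norm_tr ep_def nX mult_left_mono)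
      finally show ?thesis .
    qed
    have n2: "norm (transpose Q0 ** (M ** E)) \<le> sk * (norm M * ep)"
    proof -
      have "norm (transpose Q0 ** (M ** E)) \<le> norm (transpose Q0) * norm (M ** E)" by (rule norm_mmul)
      also have "\<dots> \<le> sk * (norm M * ep)"
        using norm_mmul[of M E] sk0 by (simp add: norm_tr ep_def nQ mult_left_mono)
      finally show ?thesis .
    qed
    have n3: "norm (transpose X ** G - L) \<le> (2 * sk * norm M * ep) * norm D"
    proof -
      have "norm (transpose X ** G - L) \<le> norm (transpose E ** (M ** X) + transpose Q0 ** (M ** E)) * norm D"
        unfolding h by (rule norm_mmul)
      also have "\<dots> \<le> (2 * sk * norm M * ep) * norm D"
        apply (rule mult_right_mono)
        using norm_triangle_ineq[of "transpose E ** (M ** X)" "transpose Q0 ** (M ** E)"] n1 n2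
        by (simp_all add: algebra_simps)
      finally show ?thesis .
    qed
    have n4: "norm (transpose E ** E) \<le> ep * ep"
      using norm_mmul[of "transpose E" E] by (simp add: norm_tr ep_def)
    have "\<bar>inner (transpose X ** G - L) (transpose E ** E)\<bar> \<le> norm (transpose X ** G - L) * norm (transpose E ** E)"
      by (rule abs_inner_le_norm)
    also have "\<dots> \<le> ((2 * sk * norm M * ep) * norm D) * (ep * ep)"
      by (rule mult_mono[OF n3 n4]) (simp_all add: ep0 sk0)
    also have "\<dots> = 2 * sk * norm M * norm D * ep^3" by (simp add: power3_eq_cube)
    finally show ?thesis .
  qed
  have nV: "norm V \<le> (1 + sk) * ep"
  proof -
    have "norm (X ** (transpose E ** E)) \<le> sk * (ep * ep)"
      using norm_mmul[of X "transpose E ** E"] norm_mmul[of "transpose E" E] sk0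
      by (simp add: nX norm_tr ep_def) (meson mult_left_mono order_trans)
    also have "\<dots> \<le> sk * ep" using ep0 ep1' sk0 by (simp add: mult_left_mono mult_left_le)
    finally have "norm (X ** (transpose E ** E)) \<le> sk * ep" .
    hence "norm V \<le> ep + (1/2) * (sk * ep)"
      unfolding V_def using norm_triangle_ineq[of "- E" "(1/2) *\<^sub>R (X ** (transpose E ** E))"]
      by (simp add: ep_def)
    also have "\<dots> \<le> (1 + sk) * ep" using sk0 ep0 by (simp add: algebra_simps)
    finally show ?thesis .
  qed
  have nW: "norm W \<le> (1 + k/2) * norm V"
  proof -
    have "norm (X ** (transpose X ** V)) \<le> sk * (sk * norm V)"
      using norm_mmul[of X "transpose X ** V"] norm_mmul[of "transpose X" V] sk0
      by (simp add: nX nXt) (meson mult_left_mono order_trans)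
    hence "norm (X ** (transpose X ** V)) \<le> k * norm V" by (simp add: skk mult.assoc[symmetric])
    hence "norm W \<le> norm V + (1/2) * (k * norm V)"
      unfolding W_def using norm_triangle_ineq4[of V "(1/2) *\<^sub>R (X ** (transpose X ** V))"]
      by simp
    thus ?thesis by (simp add: algebra_simps)
  qed
  have nOm: "norm Om \<le> \<theta> * sk * norm W"
  proof -
    have a1: "norm (W ** transpose X) \<le> norm W * sk" using norm_mmul[of W "transpose X"] by (simp add: nXt)
    have a2: "norm (X ** transpose W) \<le> sk * norm W" using norm_mmul[of X "transpose W"] by (simp add: nX norm_tr)
    have "norm (W ** transpose X - X ** transpose W) \<le> 2 * sk * norm W"
      using norm_triangle_ineq4[of "W ** transpose X" "X ** transpose W"] a1 a2 by (simp add: algebra_simps)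
    hence "(\<theta>/2) * norm (W ** transpose X - X ** transpose W) \<le> (\<theta>/2) * (2 * sk * norm W)"
      using th by (intro mult_left_mono) auto
    thus ?thesis unfolding Om_def using th by simp
  qed
  have nR: "norm R \<le> \<theta>^2 * (sk * (1 + k/2)) * (norm V)^2"
  proof -
    have "norm R \<le> norm Om * norm T" unfolding R_def by (rule norm_mmul)
    also have "\<dots> \<le> (\<theta> * sk * ((1 + k/2) * norm V)) * (\<theta> * norm V)"
    proof (rule mult_mono[OF _ nT])
      show "norm Om \<le> \<theta> * sk * ((1 + k / 2) * norm V)"
        using nOm nW th sk0 by (meson mult_left_mono order_trans mult_nonneg_nonneg less_imp_le)
    qed (use th sk0 k0 in auto)
    also have "\<dots> = \<theta>^2 * (sk * (1 + k/2)) * (norm V)^2" by (simp add: power2_eq_square algebra_simps)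
    finally show ?thesis .
  qed
  have nG: "norm G \<le> norm M * sk * norm D"
    using norm_mmul[of "M ** X" D] norm_mmul[of M X] unfolding G_def
    by (simp add: nX) (meson mult_right_mono norm_ge_zero order_trans)
  have s1: "gq M D Y - gq M D X \<ge> \<theta> * (2 * inner G V) + 2 * inner G R - \<alpha> * (\<theta> * norm V)^2"
  proof -
    have "2 * inner G T = \<theta> * (2 * inner G V) + 2 * inner G R" by (simp add: TR inner_add_right)
    moreover have "\<alpha> * (norm T)\<^sup>2 \<le> \<alpha> * (\<theta> * norm V)^2"
      using nT al by (intro mult_left_mono power_mono) auto
    ultimately show ?thesis using mm by linarith
  qed
  have s2: "\<theta> * (2 * inner G V) \<ge> 2 * \<theta> * (GG - gq M D X) - \<theta> * (2 * sk * norm M * norm D * ep^3)"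
  proof -
    have "2 * inner G V \<ge> 2 * (GG - gq M D X) - 2 * sk * norm M * norm D * ep^3"
      using gain errb by linarith
    hence "\<theta> * (2 * inner G V) \<ge> \<theta> * (2 * (GG - gq M D X) - 2 * sk * norm M * norm D * ep^3)"
      using th by (intro mult_left_mono) auto
    thus ?thesis by (simp add: algebra_simps)
  qed
  have s3: "2 * inner G R \<ge> - (2 * (norm M * sk * norm D) * (\<theta>^2 * (sk * (1 + k/2)) * (norm V)^2))"
  proof -
    have "\<bar>inner G R\<bar> \<le> norm G * norm R" by (rule abs_inner_le_norm)
    also have "\<dots> \<le> (norm M * sk * norm D) * (\<theta>^2 * (sk * (1 + k/2)) * (norm V)^2)"
      by (rule mult_mono[OF nG nR]) (use sk0 in auto)
    finally show ?thesis by linarith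
  qed
  have s4: "(norm V)^2 \<le> (1 + sk)^2 * ep^2"
    using nV by (metis norm_ge_zero power_mono power_mult_distrib)
  define C2 where "C2 = 2 * norm M * norm D * k * (1 + k/2) + \<alpha>"
  have C2: "C2 \<ge> 0" using al k0 by (simp add: C2_def)
  have s5: "2 * (norm M * sk * norm D) * (\<theta>^2 * (sk * (1 + k/2)) * (norm V)^2) + \<alpha> * (\<theta> * norm V)^2
     = \<theta>^2 * C2 * (norm V)^2"
    by (simp add: C2_def power2_eq_square algebra_simps skk[symmetric])
  have s6: "\<theta>^2 * C2 * (norm V)^2 \<le> \<theta>^2 * (C2 * (1 + sk)^2) * ep^2"
    using s4 C2 by (simp add: mult.assoc mult_left_mono)
  have "gq M D Y - gq M D X \<ge> 2 * \<theta> * (GG - gq M D X) - \<theta> * (2 * sk * norm M * norm D * ep^3) - \<theta>^2 * (C2 * (1 + sk)^2) * ep^2"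
    using s1 s2 s3 s5 s6 by linarith
  thus ?thesis by (simp add: GG_def C2_def k_def sk_def ep_def E_def mult.assoc)
qed



lemma tele: "p \<le> q \<Longrightarrow> (\<Sum>r\<in>{p..<q}. (b r - b (Suc r))) = (b p - b q :: real)"
proof (induction q)
  case 0 thus ?case by simp
next
  case (Suc q)
  show ?case
  proof (cases "p \<le> q")
    case True
    thus ?thesis using Suc by (simp add: sum.atLeastLessThan_Suc)
  next
    case False
    hence "p = Suc q" using Suc by simp
    thus ?thesis by simp
  qed
qed

lemma pot_nat:
  fixes l b :: "nat \<Rightarrow> real"
  assumes n: "n \<ge> 1"
    and ld: "\<And>p q. p < q \<Longrightarrow> q < n \<Longrightarrow> l q < l p"
    and bd: "\<And>p q. p < q \<Longrightarrow> q < n \<Longrightarrow> b q < b p"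
    and lp: "\<And>p. p < n \<Longrightarrow> l p > 0" and bp: "\<And>p. p < n \<Longrightarrow> b p > 0"
  shows "\<exists>c V. c > 0 \<and> (\<forall>p<n. V p \<ge> c \<and> V p \<le> l p * b p) \<and>
     (\<forall>p q. p < q \<longrightarrow> q < n \<longrightarrow> V p - V q \<le> l p * (b p - b q) - c \<and> V p - V q \<ge> l q * (b p - b q) + c)"
proof -
  define d where "d r = b r - b (Suc r)" for r
  define m where "m r = (l r + l (Suc r)) / 2" for r
  define c where "c = Min (insert (l (n-1) * b (n-1)) ((\<lambda>r. (l r - l (Suc r)) * d r / 2) ` {..<n-1}))"
  define V where "V p = c + (\<Sum>r\<in>{p..<n-1}. m r * d r)" for p
  have dpos: "d r > 0" if "r < n - 1" for r using bd[of r "Suc r"] that by (simp add: d_def)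
  have mlo: "m r > l (Suc r)" if "r < n - 1" for r using ld[of r "Suc r"] that by (simp add: m_def)
  have mhi: "m r < l r" if "r < n - 1" for r using ld[of r "Suc r"] that by (simp add: m_def)
  have cpos: "c > 0"
    unfolding c_def
  proof (subst Min_gr_iff)
    show "\<forall>x\<in>insert (l (n - 1) * b (n - 1)) ((\<lambda>r. (l r - l (Suc r)) * d r / 2) ` {..<n - 1}). 0 < x"
    proof
      fix x assume "x \<in> insert (l (n - 1) * b (n - 1)) ((\<lambda>r. (l r - l (Suc r)) * d r / 2) ` {..<n - 1})"
      then consider "x = l (n - 1) * b (n - 1)" | r where "r < n - 1" "x = (l r - l (Suc r)) * d r / 2" by auto
      thus "0 < x"
      proof cases
        case 1 thus ?thesis using lp[of "n-1"] bp[of "n-1"] n by simp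
      next
        case 2
        hence "l (Suc r) < l r" using ld[of r "Suc r"] by simp
        hence "(l r - l (Suc r)) * d r > 0" using dpos[of r] 2 by simp
        thus ?thesis using 2 by simp
      qed
    qed
  qed auto
  have cle1: "c \<le> l (n-1) * b (n-1)" unfolding c_def by (rule Min_le) auto
  have cle2: "c \<le> (l r - l (Suc r)) * d r / 2" if "r < n - 1" for r
    unfolding c_def by (rule Min_le) (use that in auto)
  have Vdiff: "V p - V q = (\<Sum>r\<in>{p..<q}. m r * d r)" if "p \<le> q" "q \<le> n - 1" for p q
  proof -
    have "(\<Sum>r\<in>{p..<q}. m r * d r) + (\<Sum>r\<in>{q..<n-1}. m r * d r) = (\<Sum>r\<in>{p..<n-1}. m r * d r)"
      using that by (intro sum.atLeastLessThan_concat) auto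
    thus ?thesis by (simp add: V_def)
  qed
  have bdiff: "b p - b q = (\<Sum>r\<in>{p..<q}. d r)" if "p \<le> q" for p q
    using tele[OF that, of b] by (simp add: d_def)
  have res: "\<forall>p<n. V p \<ge> c \<and> V p \<le> l p * b p"
  proof (intro allI impI conjI)
    fix p assume p: "p < n"
    have "(\<Sum>r\<in>{p..<n-1}. m r * d r) \<ge> 0"
    proof (intro sum_nonneg)
      fix r assume r: "r \<in> {p..<n-1}"
      hence "Suc r < n" by auto
      hence "l (Suc r) > 0" by (rule lp)
      hence "m r > 0" using mlo[of r] r by auto
      thus "m r * d r \<ge> 0" using dpos[of r] r by auto
    qed
    thus "V p \<ge> c" by (simp add: V_def)
    have "(\<Sum>r\<in>{p..<n-1}. m r * d r) \<le> (\<Sum>r\<in>{p..<n-1}. l p * d r)"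
    proof (rule sum_mono)
      fix r assume r: "r \<in> {p..<n-1}"
      have "m r \<le> l p"
      proof (cases "p = r")
        case True thus ?thesis using mhi[of r] r by simp
      next
        case False
        have "r < n - 1" using r by simp
        hence "r < n" by simp
        hence "l r < l p" using ld[of p r] r False by simp
        thus ?thesis using mhi[of r] \<open>r < n - 1\<close> by simp
      qed
      moreover have "d r > 0" using dpos[of r] r by simp
      ultimately show "m r * d r \<le> l p * d r" by (intro mult_right_mono) auto
    qed
    also have "\<dots> = l p * (b p - b (n-1))"
    proof (cases "p \<le> n - 1")
      case True thus ?thesis by (simp add: bdiff sum_distrib_left)
    next
      case False thus ?thesis using p by simp
    qed
    finally have "V p \<le> c + l p * (b p - b (n-1))" by (simp add: V_def)
    moreover have "l p * b (n-1) \<ge> l (n-1) * b (n-1)"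
    proof (cases "p = n - 1")
      case False
      hence "p < n - 1" using p by simp
      hence "l (n-1) < l p" using ld[of p "n-1"] n by simp
      thus ?thesis using bp[of "n-1"] n by (intro mult_right_mono) auto
    qed simp
    ultimately show "V p \<le> l p * b p" using cle1 by (simp add: algebra_simps)
  qed
  have cross: "V p - V q \<le> l p * (b p - b q) - c \<and> V p - V q \<ge> l q * (b p - b q) + c"
    if pq: "p < q" "q < n" for p q
  proof
    have e1: "l p * (b p - b q) - (V p - V q) = (\<Sum>r\<in>{p..<q}. (l p - m r) * d r)"
      using pq by (simp add: Vdiff bdiff sum_distrib_left left_diff_distrib sum_subtractf)
    have "(l p - m p) * d p \<le> (\<Sum>r\<in>{p..<q}. (l p - m r) * d r)"
    proof (rule member_le_sum)
      fix r assume r: "r \<in> {p..<q} - {p}"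
      have "m r < l r" using mhi r pq by auto
      moreover have "l r < l p" using ld[of p r] r pq by auto
      moreover have "r < n - 1" using r pq by auto
      ultimately show "0 \<le> (l p - m r) * d r" using dpos[of r] by auto
    qed (use pq in auto)
    moreover have "(l p - m p) * d p = (l p - l (Suc p)) * d p / 2" by (simp add: m_def algebra_simps)
    moreover have "c \<le> (l p - l (Suc p)) * d p / 2" using cle2 pq by auto
    ultimately show "V p - V q \<le> l p * (b p - b q) - c" using e1 by linarith
  next
    obtain s where s: "q = Suc s" using pq by (cases q) auto
    have e1: "(V p - V q) - l q * (b p - b q) = (\<Sum>r\<in>{p..<q}. (m r - l q) * d r)"
      using pq by (simp add: Vdiff bdiff sum_distrib_left left_diff_distrib sum_subtractf)
    have "(m s - l q) * d s \<le> (\<Sum>r\<in>{p..<q}. (m r - l q) * d r)"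
    proof (rule member_le_sum)
      fix r assume r: "r \<in> {p..<q} - {s}"
      have "m r > l (Suc r)" using mlo r pq by auto
      moreover have "l (Suc r) > l q" using ld[of "Suc r" q] r pq s by auto
      moreover have "r < n - 1" using r pq by auto
      ultimately show "0 \<le> (m r - l q) * d r" using dpos[of r] by auto
    qed (use pq s in auto)
    moreover have "(m s - l q) * d s = (l s - l (Suc s)) * d s / 2" by (simp add: m_def s algebra_simps)
    moreover have "c \<le> (l s - l (Suc s)) * d s / 2" using cle2 pq s by auto
    ultimately show "V p - V q \<ge> l q * (b p - b q) + c" using e1 by linarith
  qed
  show ?thesis using cpos res cross by blast
qed



lemma potentials:
  fixes lam a :: "'k::{finite,linorder} \<Rightarrow> real"
  assumes lam_dec: "\<And>i j. i < j \<Longrightarrow> lam i > lam j" and lam_pos: "\<And>i. lam i > 0"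
    and a_dec: "\<And>i j. i < j \<Longrightarrow> a i > a j" and a_pos: "\<And>i. a i > 0"
  shows "\<exists>c u v. c > 0 \<and> (\<forall>i. u i \<ge> 0) \<and> (\<forall>j. v j \<ge> c) \<and> (\<forall>i. u i + v i = lam i * a i)
     \<and> (\<forall>i j. i \<noteq> j \<longrightarrow> lam i * a j + c \<le> u i + v j)"
proof -
  obtain xs :: "'k list" where xs: "sorted_wrt (<) xs" "set xs = UNIV"
    using ex1_sorted_list_for_set_if_finite[of "UNIV :: 'k set"] by auto
  define n where "n = length xs"
  have lt: "xs ! p < xs ! q" if "p < q" "q < n" for p q
    using sorted_wrt_nth_less[OF xs(1)] that by (simp add: n_def)
  have ex: "\<exists>p<n. xs ! p = i" for i using xs(2) by (metis UNIV_I in_set_conv_nth n_def)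
  have n1: "n \<ge> 1" using ex[of undefined] by auto
  obtain c V where cV: "c > 0" "\<forall>p<n. V p \<ge> c \<and> V p \<le> lam (xs!p) * a (xs!p)"
    "\<forall>p q. p < q \<longrightarrow> q < n \<longrightarrow> V p - V q \<le> lam (xs!p) * (a (xs!p) - a (xs!q)) - c
        \<and> V p - V q \<ge> lam (xs!q) * (a (xs!p) - a (xs!q)) + c"
    using pot_nat[of n "\<lambda>p. lam (xs!p)" "\<lambda>p. a (xs!p)"] n1 lt lam_dec a_dec lam_pos a_pos
    by blast
  define ix where "ix i = (SOME p. p < n \<and> xs ! p = i)" for i
  have ix: "ix i < n" "xs ! (ix i) = i" for i
    using someI_ex[OF ex[of i]] by (auto simp: ix_def)
  define v where "v i = V (ix i)" for i
  define u where "u i = lam i * a i - v i" for i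
  have "\<forall>i. u i \<ge> 0" using cV(2) ix by (auto simp: u_def v_def) (metis ix(1) ix(2))
  moreover have "\<forall>j. v j \<ge> c" using cV(2) ix by (simp add: v_def)
  moreover have "\<forall>i. u i + v i = lam i * a i" by (simp add: u_def)
  moreover have "\<forall>i j. i \<noteq> j \<longrightarrow> lam i * a j + c \<le> u i + v j"
  proof (intro allI impI)
    fix i j :: 'k assume ij: "i \<noteq> j"
    hence "ix i \<noteq> ix j" using ix(2) by metis
    then consider "ix i < ix j" | "ix j < ix i" by linarith
    thus "lam i * a j + c \<le> u i + v j"
    proof cases
      case 1
      have "V (ix i) - V (ix j) \<le> lam i * (a i - a j) - c" using cV(3) 1 ix by metis
      thus ?thesis by (simp add: u_def v_def algebra_simps)
    next
      case 2
      have "V (ix j) - V (ix i) \<ge> lam i * (a j - a i) + c" using cV(3) 2 ix by metis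
      thus ?thesis by (simp add: u_def v_def algebra_simps)
    qed
  qed
  ultimately show ?thesis using cV(1) by blast
qed



lemma signs_finite: "finite {q::'k::finite \<Rightarrow> real. \<forall>i. q i \<in> {1,-1}}"
proof -
  have "{q::'k \<Rightarrow> real. \<forall>i. q i \<in> {1,-1}} = PiE UNIV (\<lambda>_. {1,-1})"
    by (auto simp: PiE_def extensional_def Pi_def)
  thus ?thesis by (simp add: finite_PiE)
qed

lemma dF_set: "{norm (X - Q ** diagm q) | q. \<forall>i. q i \<in> {1, -1}} = (\<lambda>q. norm (X - Q ** diagm q)) ` {q. \<forall>i. q i \<in> {1,-1}}"
  by auto

lemma dF_le: assumes "\<forall>i. q i \<in> {1,-1}" shows "dF X Q \<le> norm (X - Q ** diagm q)"
  unfolding dF_def dF_set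
proof (rule Min_le)
  show "finite ((\<lambda>q. norm (X - Q ** diagm q)) ` {q. \<forall>i. q i \<in> {1, - 1}})"
    by (intro finite_imageI signs_finite)
  show "norm (X - Q ** diagm q) \<in> (\<lambda>q. norm (X - Q ** diagm q)) ` {q. \<forall>i. q i \<in> {1, - 1}}"
    using assms by (intro imageI) simp
qed

lemma dF_attained:
  fixes X Q :: "real^'k^'d"
  shows "\<exists>q. (\<forall>i. q i \<in> {1,-1}) \<and> dF X Q = norm (X - Q ** diagm q)"
proof -
  have m: "(\<lambda>_. 1) \<in> {q::'k \<Rightarrow> real. \<forall>i. q i \<in> {1,-1}}" by simp
  have ne: "{q::'k \<Rightarrow> real. \<forall>i. q i \<in> {1,-1}} \<noteq> {}" using m by (metis empty_iff)
  have "dF X Q \<in> (\<lambda>q. norm (X - Q ** diagm q)) ` {q. \<forall>i. q i \<in> {1,-1}}"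
    unfolding dF_def dF_set
  proof (rule Min_in)
    show "finite ((\<lambda>q. norm (X - Q ** diagm q)) ` {q. \<forall>i. q i \<in> {1, - 1}})"
      by (intro finite_imageI signs_finite)
    show "(\<lambda>q. norm (X - Q ** diagm q)) ` {q. \<forall>i. q i \<in> {1, - 1}} \<noteq> {}"
      by (metis ne image_is_empty)
  qed
  thus ?thesis by auto
qed

lemma dF_nonneg: "dF X Q \<ge> 0"
  using dF_attained[of X Q] by auto

lemma signs_sq: "(\<forall>i. q i \<in> {1,-1}) \<Longrightarrow> q i * q i = (1::real)"
  by (cases "q i = 1") auto

lemma signs_stiefel:
  assumes "Q \<in> Stiefel" "\<forall>i. q i \<in> {1,-1}"
  shows "Q ** diagm q \<in> Stiefel"
proof -
  have "transpose (Q ** diagm q) ** (Q ** diagm q) = diagm q ** (transpose Q ** Q) ** diagm q"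
    by (simp add: malg diagm_tr)
  also have "\<dots> = mat 1" using assms
    by (simp add: stiefel_iff diagm_mul signs_sq diagm_one)
  finally show ?thesis by (simp add: stiefel_iff)
qed

lemma signs_M:
  fixes Q :: "real^'k^'d" and q lam :: "'k \<Rightarrow> real"
  assumes "\<forall>i. q i \<in> {1,-1}"
  shows "(Q ** diagm q) ** diagm lam ** transpose (Q ** diagm q) = Q ** diagm lam ** transpose Q"
proof -
  have "diagm q ** (diagm lam ** diagm q) = diagm lam"
  proof -
    have "(\<lambda>i. q i * (lam i * q i)) = lam"
    proof
      fix i show "q i * (lam i * q i) = lam i" using signs_sq[OF assms, of i] by (simp add: algebra_simps)
    qed
    thus ?thesis by (simp add: diagm_mul)
  qed
  hence h2: "diagm q ** (diagm lam ** (diagm q ** B)) = diagm lam ** B" for B :: "real^'d^'k"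
    by (simp add: matrix_mul_assoc)
  have "(Q ** diagm q) ** diagm lam ** transpose (Q ** diagm q) = Q ** (diagm lam ** transpose Q)"
    by (simp add: malg diagm_tr h2)
  thus ?thesis by (simp add: malg)
qed

lemma bessel_mat:
  assumes "U \<in> Stiefel"
  shows "(norm (transpose U ** Y))\<^sup>2 \<le> (norm Y)\<^sup>2"
proof -
  have "0 \<le> (norm (Y - U ** (transpose U ** Y)))\<^sup>2" by simp
  also have "\<dots> = inner Y Y - 2 * inner Y (U ** (transpose U ** Y)) + inner (U ** (transpose U ** Y)) (U ** (transpose U ** Y))"
    by (simp add: power2_norm_eq_inner inner_diff_left inner_diff_right inner_commute)
  also have "inner Y (U ** (transpose U ** Y)) = inner (transpose U ** Y) (transpose U ** Y)"
    using inner_mul_left[of U "transpose U ** Y" Y] by (simp add: inner_commute)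
  also have "inner (U ** (transpose U ** Y)) (U ** (transpose U ** Y)) = inner (transpose U ** Y) (transpose U ** Y)"
    by (rule stiefel_inner[OF assms])
  finally show ?thesis by (simp add: power2_norm_eq_inner)
qed

lemma bessel_col:
  fixes U W :: "real^'k^'d"
  assumes "U \<in> Stiefel" "W \<in> Stiefel"
  shows "(\<Sum>i\<in>UNIV. ((transpose U ** W)$i$j)\<^sup>2) \<le> 1"
proof -
  define e where "e = diagm (\<lambda>l::'k. if l = j then (1::real) else 0)"
  have "(norm (transpose U ** (W ** e)))\<^sup>2 \<le> (norm (W ** e))\<^sup>2" by (rule bessel_mat[OF assms(1)])
  moreover have "(norm (transpose U ** (W ** e)))\<^sup>2 = (\<Sum>i\<in>UNIV. ((transpose U ** W)$i$j)\<^sup>2)"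
    unfolding norm2_mat matrix_mul_assoc e_def
    by (simp add: diagm_mul_r power2_eq_square if_distrib if_distribR cong: if_cong)
  moreover have "(norm (W ** e))\<^sup>2 = (\<Sum>r\<in>UNIV. W$r$j * W$r$j)"
    unfolding norm2_mat e_def
    by (simp add: diagm_mul_r power2_eq_square if_distrib if_distribR cong: if_cong)
  moreover have "(\<Sum>r\<in>UNIV. W$r$j * W$r$j) = (transpose W ** W)$j$j"
    by (simp add: mmul_nth)
  moreover have "(transpose W ** W)$j$j = 1" using assms(2) by (simp add: stiefel_iff mat_def)
  ultimately show ?thesis by simp
qed



lemma abs_le_sq: "\<bar>b::real\<bar> \<le> 1 \<Longrightarrow> 1 - \<bar>b\<bar> \<le> 1 - b\<^sup>2"
  by (metis abs_ge_zero abs_le_square_iff diff_left_mono le_square power2_abs power2_eq_square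
      mult_left_le order_trans mult_le_cancel_left1 mult_right_le_one_le zero_le_one)

lemma growth:
  fixes Q X :: "real^'k^'d" and lam a u v :: "'k \<Rightarrow> real"
  assumes Q: "Q \<in> Stiefel" and X: "X \<in> Stiefel" and c: "c > 0"
    and u: "\<forall>i. u i \<ge> 0" and v: "\<forall>j. v j \<ge> c" and uv: "\<forall>i. u i + v i = lam i * a i"
    and cr: "\<forall>i j. i \<noteq> j \<longrightarrow> lam i * a j + c \<le> u i + v j"
  shows "gq (Q ** diagm lam ** transpose Q) (diagm a) Q - gq (Q ** diagm lam ** transpose Q) (diagm a) X
      \<ge> (c/2) * (dF X Q)\<^sup>2"
proof -
  define B where "B = transpose Q ** X"
  define P where "P i j = (B$i$j)\<^sup>2" for i j
  define r where "r i = (\<Sum>j\<in>UNIV. P i j)" for i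
  define s where "s j = (\<Sum>i\<in>UNIV. P i j)" for j
  have P0: "P i j \<ge> 0" for i j by (simp add: P_def)
  have gX: "gq (Q ** diagm lam ** transpose Q) (diagm a) X = (\<Sum>i\<in>UNIV. \<Sum>j\<in>UNIV. lam i * a j * P i j)"
  proof -
    have "gq (Q ** diagm lam ** transpose Q) (diagm a) X = inner B (diagm lam ** B ** diagm a)"
      by (simp add: gq_def inner_mul_left malg B_def)
    also have "\<dots> = (\<Sum>i\<in>UNIV. \<Sum>j\<in>UNIV. lam i * a j * P i j)"
      by (simp add: inner_mat diagm_mul_l diagm_mul_r power2_eq_square mult_ac P_def)
    finally show ?thesis .
  qed
  have gQ: "gq (Q ** diagm lam ** transpose Q) (diagm a) Q = (\<Sum>i\<in>UNIV. lam i * a i)"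
    by (rule gq_stiefel[OF Q])
  have s1: "s j \<le> 1" for j unfolding s_def P_def B_def by (rule bessel_col[OF Q X])
  have r1: "r i \<le> 1" for i
  proof -
    have "r i = (\<Sum>j\<in>UNIV. ((transpose X ** Q)$j$i)\<^sup>2)"
      unfolding r_def P_def B_def
      by (metis (no_types, lifting) matrix_transpose_mul transpose_transpose tr_nth)
    also have "\<dots> \<le> 1" by (rule bessel_col[OF X Q])
    finally show ?thesis .
  qed
  have Pjj: "P j j \<le> s j" for j
    unfolding s_def by (rule member_le_sum) (auto simp: P0)
  have k1: "(\<Sum>i\<in>UNIV. \<Sum>j\<in>UNIV. lam i * a j * P i j)
      \<le> (\<Sum>i\<in>UNIV. \<Sum>j\<in>UNIV. (u i + v j - (if i = j then 0 else c)) * P i j)"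
  proof (intro sum_mono)
    fix i j
    have "lam i * a j \<le> u i + v j - (if i = j then 0 else c)"
      using uv cr by (cases "i = j") (auto simp: algebra_simps)
    thus "lam i * a j * P i j \<le> (u i + v j - (if i = j then 0 else c)) * P i j"
      using P0 by (rule mult_right_mono)
  qed
  have k2: "(\<Sum>i\<in>UNIV. \<Sum>j\<in>UNIV. (u i + v j - (if i = j then 0 else c)) * P i j)
      = (\<Sum>i\<in>UNIV. u i * r i) + (\<Sum>j\<in>UNIV. v j * s j) - c * (\<Sum>j\<in>UNIV. (s j - P j j))"
  proof -
    have a1: "(\<Sum>i\<in>UNIV. \<Sum>j\<in>UNIV. u i * P i j) = (\<Sum>i\<in>UNIV. u i * r i)"
      by (simp add: r_def sum_distrib_left)
    have a2: "(\<Sum>i\<in>UNIV. \<Sum>j\<in>UNIV. v j * P i j) = (\<Sum>j\<in>UNIV. v j * s j)"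
      by (simp add: s_def sum_distrib_left, subst sum.swap, simp)
    have a3: "(\<Sum>i\<in>UNIV. \<Sum>j\<in>UNIV. (if i = j then 0 else c) * P i j) = c * (\<Sum>j\<in>UNIV. (s j - P j j))"
    proof -
      have "(\<Sum>i\<in>UNIV. \<Sum>j\<in>UNIV. (if i = j then 0 else c) * P i j)
          = (\<Sum>j\<in>UNIV. \<Sum>i\<in>UNIV. (if i = j then 0 else c) * P i j)" by (rule sum.swap)
      also have "\<dots> = (\<Sum>j\<in>UNIV. c * (s j - P j j))"
      proof (rule sum.cong[OF refl])
        fix j
        have "(\<Sum>i\<in>UNIV. (if i = j then 0 else c) * P i j) = (\<Sum>i\<in>UNIV. c * P i j - (if i = j then c * P j j else 0))"
          by (rule sum.cong) auto
        also have "\<dots> = c * (s j - P j j)"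
          by (simp add: sum_subtractf s_def sum_distrib_left right_diff_distrib)
        finally show "(\<Sum>i\<in>UNIV. (if i = j then 0 else c) * P i j) = c * (s j - P j j)" .
      qed
      finally show ?thesis by (simp add: sum_distrib_left)
    qed
    have "(\<Sum>i\<in>UNIV. \<Sum>j\<in>UNIV. (u i + v j - (if i = j then 0 else c)) * P i j)
      = (\<Sum>i\<in>UNIV. \<Sum>j\<in>UNIV. u i * P i j) + (\<Sum>i\<in>UNIV. \<Sum>j\<in>UNIV. v j * P i j)
        - (\<Sum>i\<in>UNIV. \<Sum>j\<in>UNIV. (if i = j then 0 else c) * P i j)"
      by (simp add: algebra_simps sum.distrib sum_subtractf)
    thus ?thesis using a1 a2 a3 by simp
  qed
  have k3: "(\<Sum>i\<in>UNIV. lam i * a i) = (\<Sum>i\<in>UNIV. u i) + (\<Sum>j\<in>UNIV. v j)"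
    using uv by (simp add: sum.distrib[symmetric])
  have k4: "(\<Sum>i\<in>UNIV. u i * r i) \<le> (\<Sum>i\<in>UNIV. u i)"
    by (intro sum_mono) (use u r1 in \<open>simp add: mult_left_le\<close>)
  have k5: "(\<Sum>j\<in>UNIV. v j * s j) \<le> (\<Sum>j\<in>UNIV. v j) - c * (\<Sum>j\<in>UNIV. (1 - s j))"
  proof -
    have "v j * s j \<le> v j - c * (1 - s j)" for j
    proof -
      have "c * (1 - s j) \<le> v j * (1 - s j)" using v s1[of j] by (intro mult_right_mono) auto
      thus ?thesis by (simp add: algebra_simps)
    qed
    hence "(\<Sum>j\<in>UNIV. v j * s j) \<le> (\<Sum>j\<in>UNIV. v j - c * (1 - s j))" by (intro sum_mono)
    also have "\<dots> = (\<Sum>j\<in>UNIV. v j) - (\<Sum>j\<in>UNIV. c * (1 - s j))" by (rule sum_subtractf)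
    also have "(\<Sum>j\<in>UNIV. c * (1 - s j)) = c * (\<Sum>j\<in>UNIV. (1 - s j))" by (rule sum_distrib_left[symmetric])
    finally show ?thesis .
  qed
  have gap: "gq (Q ** diagm lam ** transpose Q) (diagm a) Q - gq (Q ** diagm lam ** transpose Q) (diagm a) X
      \<ge> c * (\<Sum>j\<in>UNIV. (1 - P j j))"
  proof -
    have "(\<Sum>j\<in>UNIV. (1 - s j)) + (\<Sum>j\<in>UNIV. (s j - P j j)) = (\<Sum>j\<in>UNIV. (1 - P j j))"
      by (simp only: sum.distrib[symmetric]) simp
    hence "c * (\<Sum>j\<in>UNIV. (1 - s j)) + c * (\<Sum>j\<in>UNIV. (s j - P j j)) = c * (\<Sum>j\<in>UNIV. (1 - P j j))"
      by (simp only: distrib_left[symmetric])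
    thus ?thesis using gX gQ k1 k2 k3 k4 k5 by linarith
  qed
  define q where "q j = (if B$j$j \<ge> 0 then 1 else -1 :: real)" for j
  have qs: "\<forall>i. q i \<in> {1,-1}" by (simp add: q_def)
  have Bq: "B$j$j * q j = \<bar>B$j$j\<bar>" for j by (simp add: q_def)
  have babs: "\<bar>B$j$j\<bar> \<le> 1" for j
  proof -
    have "(B$j$j)\<^sup>2 \<le> 1" using Pjj[of j] s1[of j] by (simp add: P_def)
    thus ?thesis using abs_le_square_iff[of "B$j$j" 1] by simp
  qed
  have nd: "(norm (X - Q ** diagm q))\<^sup>2 = (\<Sum>j\<in>UNIV. 2 * (1 - \<bar>B$j$j\<bar>))"
  proof -
    have i1: "inner X (Q ** diagm q) = (\<Sum>j\<in>UNIV. \<bar>B$j$j\<bar>)"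
    proof -
      have "inner X (Q ** diagm q) = inner (diagm q) B"
        by (simp add: inner_commute[of X] inner_mul_left B_def)
      also have "\<dots> = (\<Sum>j\<in>UNIV. \<bar>B$j$j\<bar>)"
        by (simp add: inner_commute[of "diagm q"] inner_diagm Bq)
      finally show ?thesis .
    qed
    have i2: "inner (Q ** diagm q) (Q ** diagm q) = real CARD('k)"
      using stiefel_inner_self[OF signs_stiefel[OF Q qs]] .
    have "(norm (X - Q ** diagm q))\<^sup>2 = inner X X - 2 * inner X (Q ** diagm q) + inner (Q ** diagm q) (Q ** diagm q)"
      by (simp add: power2_norm_eq_inner inner_diff_left inner_diff_right inner_commute)
    also have "\<dots> = (\<Sum>j\<in>UNIV. 2 * (1 - \<bar>B$j$j\<bar>))"
      using stiefel_inner_self[OF X] i1 i2 by (simp add: sum_subtractf sum_distrib_left[symmetric])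
    finally show ?thesis .
  qed
  have "(dF X Q)\<^sup>2 \<le> (norm (X - Q ** diagm q))\<^sup>2"
    using dF_le[OF qs, of X Q] dF_nonneg[of X Q] by (intro power_mono) auto
  also have "\<dots> \<le> (\<Sum>j\<in>UNIV. 2 * (1 - P j j))"
    unfolding nd P_def
  proof (intro sum_mono)
    fix j
    have "(B$j$j)\<^sup>2 = \<bar>B$j$j\<bar> * \<bar>B$j$j\<bar>" by (simp add: power2_eq_square)
    also have "\<dots> \<le> \<bar>B$j$j\<bar>" using babs[of j] by (intro mult_right_le_one_le) auto
    finally show "2 * (1 - \<bar>B$j$j\<bar>) \<le> 2 * (1 - (B$j$j)\<^sup>2)" by simp
  qed
  finally have "(c/2) * (dF X Q)\<^sup>2 \<le> (c/2) * (\<Sum>j\<in>UNIV. 2 * (1 - P j j))"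
    using c by (intro mult_left_mono) auto
  also have "\<dots> = c * (\<Sum>j\<in>UNIV. (1 - P j j))"
    by (simp only: sum_distrib_left[symmetric])
  finally show ?thesis using gap by linarith
qed



theorem theorem1:
  fixes Q :: "real^'k::{finite,linorder}^'d::finite"
    and lam a :: "'k \<Rightarrow> real"
  assumes dK: "CARD('d) > CARD('k)"
    and Q: "Q \<in> Stiefel"
    and lam_dec: "\<And>i j. i < j \<Longrightarrow> lam i > lam j"
    and lam_pos: "\<And>i. lam i > 0"
    and a_dec: "\<And>i j. i < j \<Longrightarrow> a i > a j"
    and a_pos: "\<And>i. a i > 0"
  defines "i1 \<equiv> (LEAST i. True)"
    and "iK \<equiv> (GREATEST i. True)"
  shows "\<exists>\<delta> \<eta>. 0 < \<delta> \<and> \<delta> < sqrt 2 / 2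
     \<and> lam iK * a iK - lam i1 * a i1 * \<delta> > 0
     \<and> \<eta> > 0
     \<and> (\<forall>X \<in> Stiefel. gfun Q lam a Q - gfun Q lam a X \<ge> \<eta> * (dF X Q)\<^sup>2)
     \<and> (\<forall>\<alpha>. 0 < \<alpha> \<and> \<alpha> < lam iK * a iK - lam i1 * a i1 * \<delta> \<longrightarrow>
          (\<exists>c \<gamma>. c > 0 \<and> 0 < \<gamma> \<and> \<gamma> < 1 \<and>
             (\<forall>Xs.
                Xs 0 \<in> Stiefel
                \<and> gfun Q lam a Q - gfun Q lam a (Xs 0) \<le> \<delta>\<^sup>2 * \<eta>
                \<and> (\<forall>t. Xs (Suc t) \<in> PSt (Aop \<alpha> Q lam a (Xs t)))
                \<longrightarrow> (\<forall>t. gfun Q lam a Q - gfun Q lam a (Xs (Suc t))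
                          \<le> \<gamma> * (gfun Q lam a Q - gfun Q lam a (Xs t))
                        \<and> dF (Xs t) Q
                          \<le> c * sqrt (gfun Q lam a Q - gfun Q lam a (Xs 0)) * (sqrt \<gamma>) ^ t))))"
proof -
  define M where "M = Q ** diagm lam ** transpose Q"
  define D where "D = diagm a"
  define k where "k = real CARD('k)"
  define sk where "sk = sqrt k"
  define gap where "gap X = gq M D Q - gq M D X" for X
  have lam0: "\<forall>i. lam i \<ge> 0" using lam_pos less_imp_le by blast
  have a0: "\<forall>i. a i \<ge> 0" using a_pos less_imp_le by blast
  have gfun_eq: "gfun Q lam a X = gq M D X" for X
    using lam0 by (simp add: gfun_def gq_def Theta_sq malg trace_inner M_def D_def)
  have Aop_eq: "Aop \<alpha> Q lam a X = \<alpha> *\<^sub>R X + M ** X ** D" for \<alpha> X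
    using lam0 by (simp add: Aop_def Theta_sq M_def D_def)
  have gQ: "gq M D Q = (\<Sum>i\<in>UNIV. lam i * a i)" unfolding M_def D_def by (rule gq_stiefel[OF Q])
  obtain c u v where cuv: "c > 0" "\<forall>i. u i \<ge> 0" "\<forall>j. v j \<ge> c" "\<forall>i. u i + v i = lam i * a i"
     "\<forall>i j. i \<noteq> j \<longrightarrow> lam i * a j + c \<le> u i + v j"
    using potentials[of lam a, OF lam_dec lam_pos a_dec a_pos] by blast
  define \<eta> where "\<eta> = c / 2"
  have eta: "\<eta> > 0" using cuv by (simp add: \<eta>_def)
  have grow: "gap X \<ge> \<eta> * (dF X Q)\<^sup>2" if "X \<in> Stiefel" for X
    using growth[OF Q that cuv] by (simp add: gap_def M_def D_def \<eta>_def)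
  have gap0: "gap X \<ge> 0" if "X \<in> Stiefel" for X
    using grow[OF that] eta by (meson mult_nonneg_nonneg less_imp_le zero_le_power2 order_trans)
  define C1 where "C1 = 2 * sk * norm M * norm D"
  have C1: "C1 \<ge> 0" by (simp add: C1_def sk_def k_def)
  define L1 where "L1 = lam iK * a iK"
  define L2 where "L2 = lam i1 * a i1"
  have L1: "L1 > 0" and L2: "L2 > 0" using lam_pos a_pos by (simp_all add: L1_def L2_def)
  define \<delta> where "\<delta> = min (1/2) (min (\<eta> / (2 * C1 + 1)) (L1 / (2 * L2)))"
  have d0: "\<delta> > 0" using eta C1 L1 L2 by (simp add: \<delta>_def)
  have d1: "\<delta> \<le> 1/2" unfolding \<delta>_def by (rule min.cobounded1)
  have d2: "C1 * \<delta> \<le> \<eta> / 2"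
  proof -
    have "\<delta> \<le> \<eta> / (2 * C1 + 1)" by (simp add: \<delta>_def)
    hence "C1 * \<delta> \<le> C1 * (\<eta> / (2 * C1 + 1))" using C1 by (rule mult_left_mono)
    also have "\<dots> \<le> \<eta> / 2" using C1 eta by (simp add: field_simps)
    finally show ?thesis .
  qed
  have d3: "L1 - L2 * \<delta> > 0"
  proof -
    have "\<delta> \<le> L1 / (2 * L2)" by (simp add: \<delta>_def)
    hence "L2 * \<delta> \<le> L2 * (L1 / (2 * L2))" using L2 by (intro mult_left_mono) auto
    also have "\<dots> = L1 / 2" using L2 by simp
    finally show ?thesis using L1 by simp
  qed
  have d4: "\<delta> < sqrt 2 / 2"
  proof -
    have "(1::real) < sqrt 2" by simp
    hence "2 * \<delta> < sqrt 2" using d1 by linarith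
    thus ?thesis by simp
  qed
  have step: "gap Y \<le> (1 - \<theta>) * gap X"
    if X: "X \<in> Stiefel" and gX: "gap X \<le> \<delta>\<^sup>2 * \<eta>" and Y: "Y \<in> PSt (\<alpha> *\<^sub>R X + M ** X ** D)"
      and al: "\<alpha> > 0" and th: "0 < \<theta>" "\<theta> \<le> 1"
      and thC: "\<theta> * ((2 * norm M * norm D * k * (1 + k/2) + \<alpha>) * (1 + sk)^2) \<le> \<eta> / 2"
    for X Y \<alpha> \<theta>
  proof -
    obtain q where q: "\<forall>i. q i \<in> {1,-1}" "dF X Q = norm (X - Q ** diagm q)"
      using dF_attained by blast
    define Q0 where "Q0 = Q ** diagm q"
    define ep where "ep = norm (X - Q0)"
    have Q0: "Q0 \<in> Stiefel" unfolding Q0_def by (rule signs_stiefel[OF Q q(1)])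
    have MQ0: "M = Q0 ** diagm lam ** transpose Q0" unfolding M_def Q0_def by (rule signs_M[OF q(1), symmetric])
    have ep0: "ep \<ge> 0" by (simp add: ep_def)
    have epd: "ep \<le> \<delta>"
    proof -
      have "\<eta> * ep\<^sup>2 \<le> \<eta> * \<delta>\<^sup>2" using grow[OF X] gX q(2) by (simp add: ep_def Q0_def mult.commute)
      hence "ep\<^sup>2 \<le> \<delta>\<^sup>2" using eta by simp
      thus ?thesis using d0 ep0 by (simp add: power2_le_iff_abs_le)
    qed
    have ep1: "norm (X - Q0) \<le> 1" using epd d1 by (simp add: ep_def)
    note loc = local_step[OF Q0 X lam0 a0 MQ0 D_def Y al th ep1]
    define C2 where "C2 = (2 * norm M * norm D * k * (1 + k/2) + \<alpha>) * (1 + sk)^2"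
    have loc': "gq M D Y - gq M D X \<ge> 2 * \<theta> * gap X - \<theta> * C1 * ep^3 - \<theta>^2 * C2 * ep^2"
      using loc by (simp add: gap_def gQ C1_def C2_def k_def sk_def ep_def)
    have ge: "\<eta> * ep\<^sup>2 \<le> gap X" using grow[OF X] q(2) by (simp add: ep_def Q0_def)
    have t1: "\<theta> * C1 * ep^3 \<le> \<theta> * (gap X / 2)"
    proof -
      have "C1 * ep \<le> C1 * \<delta>" using epd C1 by (rule mult_left_mono)
      hence "C1 * ep \<le> \<eta> / 2" using d2 by linarith
      hence "(C1 * ep) * ep\<^sup>2 \<le> (\<eta> / 2) * ep\<^sup>2" by (rule mult_right_mono) simp
      also have "\<dots> \<le> gap X / 2" using ge by simp
      finally have "C1 * ep^3 \<le> gap X / 2" by (simp add: power2_eq_square power3_eq_cube mult.assoc)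
      thus ?thesis using th by (simp add: mult.assoc mult_left_mono)
    qed
    have t2: "\<theta>^2 * C2 * ep^2 \<le> \<theta> * (gap X / 2)"
    proof -
      have "(\<theta> * C2) * ep\<^sup>2 \<le> (\<eta> / 2) * ep\<^sup>2" using thC by (intro mult_right_mono) (auto simp: C2_def)
      also have "\<dots> \<le> gap X / 2" using ge by simp
      finally have "(\<theta> * C2) * ep\<^sup>2 \<le> gap X / 2" .
      hence "\<theta> * ((\<theta> * C2) * ep\<^sup>2) \<le> \<theta> * (gap X / 2)" using th by (intro mult_left_mono) auto
      thus ?thesis by (simp add: power2_eq_square mult_ac)
    qed
    have "gq M D Y - gq M D X \<ge> \<theta> * gap X" using loc' t1 t2 by (simp add: algebra_simps)
    thus ?thesis by (simp add: gap_def algebra_simps)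
  qed
  have mainA: "\<exists>cc \<gamma>. cc > 0 \<and> 0 < \<gamma> \<and> \<gamma> < 1 \<and>
             (\<forall>Xs.
                Xs 0 \<in> Stiefel
                \<and> gfun Q lam a Q - gfun Q lam a (Xs 0) \<le> \<delta>\<^sup>2 * \<eta>
                \<and> (\<forall>t. Xs (Suc t) \<in> PSt (Aop \<alpha> Q lam a (Xs t)))
                \<longrightarrow> (\<forall>t. gfun Q lam a Q - gfun Q lam a (Xs (Suc t))
                          \<le> \<gamma> * (gfun Q lam a Q - gfun Q lam a (Xs t))
                        \<and> dF (Xs t) Q
                          \<le> cc * sqrt (gfun Q lam a Q - gfun Q lam a (Xs 0)) * (sqrt \<gamma>) ^ t))"
    if al: "\<alpha> > 0" for \<alpha>
  proof -
    define C2 where "C2 = (2 * norm M * norm D * k * (1 + k/2) + \<alpha>) * (1 + sk)^2"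
    have C2: "C2 \<ge> 0" using al by (simp add: C2_def k_def)
    define \<theta> where "\<theta> = min (1/2) (\<eta> / (2 * C2 + 1))"
    have th0: "\<theta> > 0" using eta C2 by (simp add: \<theta>_def)
    have th1: "\<theta> \<le> 1/2" unfolding \<theta>_def by (rule min.cobounded1)
    have thC: "\<theta> * C2 \<le> \<eta> / 2"
    proof -
      have "\<theta> \<le> \<eta> / (2 * C2 + 1)" unfolding \<theta>_def by (rule min.cobounded2)
      hence "\<theta> * C2 \<le> (\<eta> / (2 * C2 + 1)) * C2" using C2 by (rule mult_right_mono)
      also have "\<dots> \<le> \<eta> / 2" using C2 eta by (simp add: field_simps)
      finally show ?thesis .
    qed
    define \<gamma> where "\<gamma> = 1 - \<theta>"
    have g0: "0 < \<gamma>" "\<gamma> < 1" using th0 th1 by (auto simp: \<gamma>_def)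
    define cc where "cc = 1 / sqrt \<eta>"
    have cc: "cc > 0" using eta by (simp add: cc_def)
    have main: "gfun Q lam a Q - gfun Q lam a (Xs (Suc t)) \<le> \<gamma> * (gfun Q lam a Q - gfun Q lam a (Xs t))
         \<and> dF (Xs t) Q \<le> cc * sqrt (gfun Q lam a Q - gfun Q lam a (Xs 0)) * (sqrt \<gamma>)^t"
      if H: "Xs 0 \<in> Stiefel \<and> gfun Q lam a Q - gfun Q lam a (Xs 0) \<le> \<delta>\<^sup>2 * \<eta>
                \<and> (\<forall>t. Xs (Suc t) \<in> PSt (Aop \<alpha> Q lam a (Xs t)))" for Xs t
    proof -
      have H0: "Xs 0 \<in> Stiefel" and Hg: "gap (Xs 0) \<le> \<delta>\<^sup>2 * \<eta>"
        and HS: "\<And>t. Xs (Suc t) \<in> PSt (\<alpha> *\<^sub>R Xs t + M ** Xs t ** D)"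
        using H by (auto simp: gfun_eq gap_def Aop_eq)
      have G0: "gap (Xs 0) \<ge> 0" by (rule gap0[OF H0])
      have inv: "Xs n \<in> Stiefel \<and> gap (Xs n) \<le> \<gamma>^n * gap (Xs 0)" for n
      proof (induction n)
        case 0 thus ?case using H0 by simp
      next
        case (Suc n)
        have gn: "gap (Xs n) \<le> \<delta>\<^sup>2 * \<eta>"
        proof -
          have "\<gamma>^n \<le> 1" using g0 by (simp add: power_le_one)
          hence "\<gamma>^n * gap (Xs 0) \<le> 1 * gap (Xs 0)" using G0 by (rule mult_right_mono)
          thus ?thesis using Suc Hg by linarith
        qed
        have "gap (Xs (Suc n)) \<le> (1 - \<theta>) * gap (Xs n)"
          using step[OF _ gn HS al th0 _ _] Suc th1 thC by (simp add: C2_def)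
        also have "\<dots> \<le> \<gamma> * (\<gamma>^n * gap (Xs 0))" using Suc g0 by (simp add: \<gamma>_def mult_left_mono)
        finally show ?case using PSt_opt(1)[OF HS[of n]] by (simp add: mult.assoc)
      qed
      have gt: "gap (Xs t) \<le> \<delta>\<^sup>2 * \<eta>"
      proof -
        have "\<gamma>^t \<le> 1" using g0 by (simp add: power_le_one)
        hence "\<gamma>^t * gap (Xs 0) \<le> 1 * gap (Xs 0)" using G0 by (rule mult_right_mono)
        thus ?thesis using inv[of t] Hg by linarith
      qed
      have "gap (Xs (Suc t)) \<le> \<gamma> * gap (Xs t)"
        using step[OF _ gt HS al th0 _ _] inv[of t] th1 thC by (simp add: C2_def \<gamma>_def)
      hence A: "gfun Q lam a Q - gfun Q lam a (Xs (Suc t)) \<le> \<gamma> * (gfun Q lam a Q - gfun Q lam a (Xs t))"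
        by (simp add: gfun_eq gap_def)
      have "\<eta> * (dF (Xs t) Q)\<^sup>2 \<le> \<gamma>^t * gap (Xs 0)" using grow[of "Xs t"] inv[of t] by auto
      hence "(dF (Xs t) Q)\<^sup>2 \<le> \<gamma>^t * gap (Xs 0) / \<eta>" using eta by (simp add: field_simps)
      hence "dF (Xs t) Q \<le> sqrt (\<gamma>^t * gap (Xs 0) / \<eta>)"
        using dF_nonneg by (simp add: real_le_rsqrt)
      also have "sqrt (\<gamma>^t * gap (Xs 0) / \<eta>) = cc * sqrt (gap (Xs 0)) * (sqrt \<gamma>)^t"
        by (simp add: cc_def real_sqrt_mult real_sqrt_divide real_sqrt_power)
      finally have "dF (Xs t) Q \<le> cc * sqrt (gfun Q lam a Q - gfun Q lam a (Xs 0)) * (sqrt \<gamma>)^t"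
        by (simp add: gfun_eq gap_def)
      with A show ?thesis by blast
    qed
    show ?thesis using main cc g0 by blast
  qed
  show ?thesis
  proof (rule exI[of _ \<delta>], rule exI[of _ \<eta>], intro conjI d0 d4 eta ballI allI impI)
    show "lam iK * a iK - lam i1 * a i1 * \<delta> > 0" using d3 by (simp add: L1_def L2_def)
    fix X :: "real^'k::{finite,linorder}^'d::finite" assume "X \<in> Stiefel"
    thus "gfun Q lam a Q - gfun Q lam a X \<ge> \<eta> * (dF X Q)\<^sup>2" using grow by (simp add: gfun_eq gap_def)
  next
    fix \<alpha> :: real assume "0 < \<alpha> \<and> \<alpha> < lam iK * a iK - lam i1 * a i1 * \<delta>"
    thus "\<exists>cc \<gamma>. cc > 0 \<and> 0 < \<gamma> \<and> \<gamma> < 1 \<and>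
             (\<forall>Xs.
                Xs 0 \<in> Stiefel
                \<and> gfun Q lam a Q - gfun Q lam a (Xs 0) \<le> \<delta>\<^sup>2 * \<eta>
                \<and> (\<forall>t. Xs (Suc t) \<in> PSt (Aop \<alpha> Q lam a (Xs t)))
                \<longrightarrow> (\<forall>t. gfun Q lam a Q - gfun Q lam a (Xs (Suc t))
                          \<le> \<gamma> * (gfun Q lam a Q - gfun Q lam a (Xs t))
                        \<and> dF (Xs t) Q
                          \<le> cc * sqrt (gfun Q lam a Q - gfun Q lam a (Xs 0)) * (sqrt \<gamma>) ^ t))"
      using mainA by blast
  qed
qed


end
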